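(* Fix $M>0$. If $c\in\ell_{\infty,M}(X^\ast,\mathbb{K}^\ell)$ and $d\in\ell_{\infty,M}(X^\ast,\mathbb{K}^m)$, then $c\circ d\in\ell_{\infty,M_\epsilon}(X^\ast,\mathbb{K}^\ell)$ for any $M_\epsilon=M(1+\epsilon)$ with $\epsilon>\phi(m\|d\|_{\ell_\infty,M})$, where $\phi(x)=x/2+\sqrt{x^2/4+x}$, and $$\|c\circ d\|_{\ell_\infty,M_\epsilon}\leq \|c\|_{\ell_\infty,M}\,(K_\epsilon\circ\phi)(m\|d\|_{\ell_\infty,M}),$$ where $K_\epsilon(a)=\sup_{\eta\in X^\ast}(|\eta|+1)(1+a)^{|\eta|}/(1+\epsilon)^{|\eta|}$.
   Context: $\mathbb{K}\in\{\mathbb{R},\mathbb{C}\}$. $X=\{x_0,x_1,\ldots,x_m\}$ is a finite alphabet, $X^\ast$ its set of words (including the empty word $\emptyset$), $|\eta|$ the length. $\mathbb{K}^\ell\langle\langle X\rangle\rangle$ is the set of maps $X^\ast\to\mathbb{K}^\ell$, written $c=\sum_\eta (c,\eta)\eta$. For $M>0$, $\|c\|_{\ell_\infty,M}=\sup_\eta|(c,\eta)|/(M^{|\eta|}|\eta|!)$ with $|z|=\max_i|z_i|$, and $\ell_{\infty,M}(X^\ast,\mathbb{K}^\ell)$ is the Banach space of series with finite norm. The shuffle product $\sqcup\!\sqcup$ is the bilinear product determined on words by $(x_i\eta)\sqcup\!\sqcup(x_j\xi)=x_i(\eta\sqcup\!\sqcup(x_j\xi))+x_j((x_i\eta)\sqcup\!\sqcup\xi)$,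 $\eta\sqcup\!\sqcup\emptyset=\emptyset\sqcup\!\sqcup\eta=\eta$. Composition product: for $c\in\mathbb{K}^\ell\langle\langle X\rangle\rangle$, $d\in\mathbb{K}^m\langle\langle X\rangle\rangle$ with components $d[1],\ldots,d[m]$ and $d[0]:=\mathbf{1}=1\cdot\emptyset$, let $\psi_d$ be the algebra homomorphism from words to linear endomorphisms of $\mathbb{K}\langle\langle X\rangle\rangle$ given by $\psi_d(\emptyset)=\mathrm{id}$, $\psi_d(x_i\eta)=\psi_d(x_i)\circ\psi_d(\eta)$, $\psi_d(x_i)(e)=x_0(d[i]\sqcup\!\sqcup e)$, $i=0,\ldots,m$; then $c\circ d=\sum_{\eta\in X^\ast}(c,\eta)\,\psi_d(\eta)(\mathbf{1})$. *)

theory Defs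
  imports Complex_Main
begin

text \<open>Words over the alphabet X = {x_0,...,x_m} are lists of naturals with letters in {0..m}
  (letter i stands for x_i). Series are functions on words; a K^n-valued series is a function
  nat list => nat => 'k whose components are indexed by 0..<n.\<close>

definition words :: "nat \<Rightarrow> nat list set" where
  "words m = {\<eta>. set \<eta> \<subseteq> {0..m}}"

fun shw :: "'a list \<Rightarrow> 'a list \<Rightarrow> 'a list list" where
  "shw [] v = [v]"
| "shw u [] = [u]"
| "shw (a # u) (b # v) = map ((#) a) (shw u (b # v)) @ map ((#) b) (shw (a # u) v)"

text \<open>Bilinear extension to series: the coefficient of w collects all pairs (u,v) of words
  whose shuffle contains w (such u, v are necessarily subsequences of w).\<close>
definition shuffle :: "(nat list \<Rightarrow> 'k::comm_ring_1) \<Rightarrow> (nat list \<Rightarrow> 'k) \<Rightarrow> nat list \<Rightarrow> 'k" where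
  "shuffle c d w = (\<Sum>u\<in>set (subseqs w). \<Sum>v\<in>set (subseqs w).
      c u * d v * of_nat (count_list (shw u v) w))"

definition one_s :: "nat list \<Rightarrow> 'k::zero_neq_one" where
  "one_s w = (if w = [] then 1 else 0)"

definition pre0 :: "(nat list \<Rightarrow> 'k::zero) \<Rightarrow> nat list \<Rightarrow> 'k" where
  "pre0 s w = (case w of [] \<Rightarrow> 0 | a # w' \<Rightarrow> (if a = 0 then s w' else 0))"

text \<open>d[0] = 1 and d[i] = i-th component (stored at index i-1) for i = 1..m.\<close>
definition dcomp :: "(nat list \<Rightarrow> nat \<Rightarrow> 'k::zero_neq_one) \<Rightarrow> nat \<Rightarrow> nat list \<Rightarrow> 'k" where
  "dcomp d i = (if i = 0 then one_s else (\<lambda>w. d w (i - 1)))"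

fun psi_one :: "(nat list \<Rightarrow> nat \<Rightarrow> 'k::comm_ring_1) \<Rightarrow> nat list \<Rightarrow> nat list \<Rightarrow> 'k" where
  "psi_one d [] = one_s"
| "psi_one d (i # \<eta>) = pre0 (shuffle (dcomp d i) (psi_one d \<eta>))"

text \<open>Composition product. psi_d(eta)(1) is supported on words of length at least |eta|,
  so the coefficient of w only receives contributions from words eta with |eta| <= |w|.\<close>
definition comp :: "nat \<Rightarrow> (nat list \<Rightarrow> nat \<Rightarrow> 'k::comm_ring_1) \<Rightarrow> (nat list \<Rightarrow> nat \<Rightarrow> 'k)
    \<Rightarrow> nat list \<Rightarrow> nat \<Rightarrow> 'k" where
  "comp m c d w j = (\<Sum>\<eta>\<in>{\<eta>. \<eta> \<in> words m \<and> length \<eta> \<le> length w}. c \<eta> j * psi_one d \<eta> w)"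

definition vnorm :: "nat \<Rightarrow> (nat \<Rightarrow> 'k::real_normed_vector) \<Rightarrow> real" where
  "vnorm n z = Max (insert 0 ((\<lambda>i. norm (z i)) ` {..<n}))"

definition normset :: "nat \<Rightarrow> real \<Rightarrow> nat \<Rightarrow> (nat list \<Rightarrow> nat \<Rightarrow> 'k::real_normed_vector) \<Rightarrow> real set" where
  "normset m M n c = {vnorm n (c \<eta>) / (M ^ length \<eta> * fact (length \<eta>)) | \<eta>. \<eta> \<in> words m}"

definition in_linf :: "nat \<Rightarrow> real \<Rightarrow> nat \<Rightarrow> (nat list \<Rightarrow> nat \<Rightarrow> 'k::real_normed_vector) \<Rightarrow> bool" where
  "in_linf m M n c \<longleftrightarrow> bdd_above (normset m M n c)"

definition linf_norm :: "nat \<Rightarrow> real \<Rightarrow> nat \<Rightarrow> (nat list \<Rightarrow> nat \<Rightarrow> 'k::real_normed_vector) \<Rightarrow> real" where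
  "linf_norm m M n c = Sup (normset m M n c)"

definition phi :: "real \<Rightarrow> real" where
  "phi x = x / 2 + sqrt (x ^ 2 / 4 + x)"

definition Keps :: "nat \<Rightarrow> real \<Rightarrow> real \<Rightarrow> real" where
  "Keps m eps a = (SUP \<eta>\<in>words m. (real (length \<eta>) + 1) * (1 + a) ^ length \<eta> / (1 + eps) ^ length \<eta>)"

end

theory Submission
  imports Defs
begin

fun splits :: "'a list \<Rightarrow> ('a list \<times> 'a list) list" where
  "splits [] = [([], [])]"
| "splits (c # w) = map (\<lambda>(u, v). (c # u, v)) (splits w) @ map (\<lambda>(u, v). (u, c # v)) (splits w)"

lemma count_map_cons1:
  "count_list (map (\<lambda>(x, y). (c # x, y)) X) (u, v) =
    (case u of [] \<Rightarrow> 0 | a # u' \<Rightarrow> if a = c then count_list X (u', v) else 0)"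
  by (induction X) (auto split: list.splits)

lemma count_map_cons2:
  "count_list (map (\<lambda>(x, y). (x, c # y)) X) (u, v) =
    (case v of [] \<Rightarrow> 0 | b # v' \<Rightarrow> if b = c then count_list X (u, v') else 0)"
  by (induction X) (auto split: list.splits)

lemma count_map_cons:
  "count_list (map ((#) a) X) w =
    (case w of [] \<Rightarrow> 0 | b # w' \<Rightarrow> if a = b then count_list X w' else 0)"
  by (induction X) (auto split: list.splits)

lemma shw_Nil2[simp]: "shw u [] = [u]"
  by (cases u) auto

lemma count_shw_splits: "count_list (shw u v) w = count_list (splits w) (u, v)"
proof (induction w arbitrary: u v)
  case Nil
  then show ?case
    by (cases u; cases v) (auto simp: count_map_cons)
next
  case (Cons c w)
  show ?case
  proof (cases u)
    case Nil
    then show ?thesis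
      by (cases v) (auto simp: count_map_cons1 count_map_cons2 simp flip: Cons.IH)
  next
    case (Cons a u')
    then show ?thesis
      by (cases v) (auto simp: count_map_cons1 count_map_cons2 count_map_cons simp flip: Cons.IH)
  qed
qed

lemma splits_set:
  "(u, v) \<in> set (splits w) \<Longrightarrow> u \<in> set (subseqs w) \<and> v \<in> set (subseqs w) \<and> set u \<subseteq> set w \<and> set v \<subseteq> set w"
proof (induction w arbitrary: u v)
  case Nil then show ?case by simp
next
  case (Cons a w)
  have "(\<exists>u'. u = a#u' \<and> (u',v) \<in> set (splits w)) \<or> (\<exists>v'. v = a#v' \<and> (u,v') \<in> set (splits w))"
    using Cons.prems by auto
  then show ?case
  proof
    assume "\<exists>u'. u = a#u' \<and> (u',v) \<in> set (splits w)"
    then obtain u' where "u = a#u'" "(u',v) \<in> set (splits w)" by blast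
    with Cons.IH[of u' v] show ?thesis by (auto simp: Let_def)
  next
    assume "\<exists>v'. v = a#v' \<and> (u,v') \<in> set (splits w)"
    then obtain v' where "v = a#v'" "(u,v') \<in> set (splits w)" by blast
    with Cons.IH[of u v'] show ?thesis by (auto simp: Let_def)
  qed
qed

lemma sum_list_count:
  fixes f :: "'a \<Rightarrow> 'b::comm_ring_1"
  assumes "set xs \<subseteq> X" "finite X"
  shows "sum_list (map f xs) = (\<Sum>x\<in>X. of_nat (count_list xs x) * f x)"
  using assms
proof (induction xs)
  case Nil then show ?case by simp
next
  case (Cons y xs)
  have "(\<Sum>x\<in>X. of_nat (count_list (y # xs) x) * f x) =
        (\<Sum>x\<in>X. (if x = y then f x else 0) + of_nat (count_list xs x) * f x)"
    by (rule sum.cong) (auto simp: algebra_simps)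
  also have "\<dots> = f y + (\<Sum>x\<in>X. of_nat (count_list xs x) * f x)"
    using Cons.prems by (simp add: sum.distrib)
  finally show ?case using Cons by simp
qed

lemma shuffle_splits:
  "shuffle f g w = sum_list (map (\<lambda>(u, v). f u * g v) (splits w))"
proof -
  let ?S = "set (subseqs w)"
  have "sum_list (map (\<lambda>(u, v). f u * g v) (splits w)) =
     (\<Sum>p\<in>?S \<times> ?S. of_nat (count_list (splits w) p) * (case p of (u, v) \<Rightarrow> f u * g v))"
    by (rule sum_list_count) (auto dest: splits_set)
  also have "\<dots> = (\<Sum>u\<in>?S. \<Sum>v\<in>?S. f u * g v * of_nat (count_list (shw u v) w))"
    unfolding sum.cartesian_product by (rule sum.cong) (auto simp: count_shw_splits mult.commute)
  finally show ?thesis by (simp add: shuffle_def)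
qed

lemma pascal_sum:
  fixes G :: "nat \<Rightarrow> nat \<Rightarrow> real"
  shows "(\<Sum>p\<le>Suc n. real (Suc n choose p) * G p (Suc n - p)) =
    (\<Sum>p\<le>n. real (n choose p) * G (Suc p) (n - p)) + (\<Sum>p\<le>n. real (n choose p) * G p (Suc n - p))"
proof -
  have A: "(\<Sum>p\<le>Suc n. real (Suc n choose p) * G p (Suc n - p)) =
     G 0 (Suc n) + (\<Sum>p\<le>n. real (n choose p) * G (Suc p) (n - p)) + (\<Sum>p\<le>n. real (n choose Suc p) * G (Suc p) (n - p))"
    by (simp add: sum.atMost_Suc_shift sum.distrib algebra_simps del: sum.atMost_Suc)
  have B: "(\<Sum>p\<le>n. real (n choose p) * G p (Suc n - p)) = (\<Sum>p\<le>Suc n. real (n choose p) * G p (Suc n - p))"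
    by simp
  also have "\<dots> = G 0 (Suc n) + (\<Sum>p\<le>n. real (n choose Suc p) * G (Suc p) (n - p))"
    by (simp add: sum.atMost_Suc_shift del: sum.atMost_Suc)
  finally show ?thesis using A by simp
qed

lemma sl_map1:
  "sum_list (map (\<lambda>(u, v). F (length u) (length v)) (map (\<lambda>(u, v). (c # u, v)) xs))
      = sum_list (map (\<lambda>(u, v). F (Suc (length u)) (length v)) xs)"
  by (induction xs) auto
lemma sl_map2:
  "sum_list (map (\<lambda>(u, v). F (length u) (length v)) (map (\<lambda>(u, v). (u, c # v)) xs))
      = sum_list (map (\<lambda>(u, v). F (length u) (Suc (length v))) xs)"
  by (induction xs) auto

lemma splits_binom:
  fixes F :: "nat \<Rightarrow> nat \<Rightarrow> real"
  shows "sum_list (map (\<lambda>(u, v). F (length u) (length v)) (splits w)) =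
    (\<Sum>p\<le>length w. real (length w choose p) * F p (length w - p))"
proof (induction w arbitrary: F)
  case Nil then show ?case by simp
next
  case (Cons c w)
  have e1: "sum_list (map (\<lambda>(u, v). F (length u) (length v)) (map (\<lambda>(u, v). (c # u, v)) (splits w)))
      = sum_list (map (\<lambda>(u, v). F (Suc (length u)) (length v)) (splits w))"
    by (rule sl_map1)
  have e2: "sum_list (map (\<lambda>(u, v). F (length u) (length v)) (map (\<lambda>(u, v). (u, c # v)) (splits w)))
      = sum_list (map (\<lambda>(u, v). F (length u) (Suc (length v))) (splits w))"
    by (rule sl_map2)
  have e3: "(\<Sum>p\<le>length w. real (length w choose p) * F p (Suc (length w - p))) =
      (\<Sum>p\<le>length w. real (length w choose p) * F p (Suc (length w) - p))"
    by (rule sum.cong) (auto simp: Suc_diff_le)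
  show ?case
    using Cons.IH[of "\<lambda>p q. F (Suc p) q"] Cons.IH[of "\<lambda>p q. F p (Suc q)"] e1 e2 e3
    by (simp add: pascal_sum del: sum.atMost_Suc)
qed

definition Bnd :: "real \<Rightarrow> real \<Rightarrow> nat \<Rightarrow> nat \<Rightarrow> real" where
  "Bnd M al k n = (if k \<le> n then fact n / fact k * M ^ (n - k) * al ^ n else 0)"

definition Dsum :: "real \<Rightarrow> real \<Rightarrow> nat \<Rightarrow> real" where
  "Dsum M a p = (if p = 0 then 1 else 0) + a * M ^ p * fact p"

lemma Bnd_nonneg: "M \<ge> 0 \<Longrightarrow> al \<ge> 0 \<Longrightarrow> Bnd M al k n \<ge> 0"
  by (simp add: Bnd_def)

lemma Dsum_nonneg: "M \<ge> 0 \<Longrightarrow> a \<ge> 0 \<Longrightarrow> Dsum M a p \<ge> 0"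
  by (simp add: Dsum_def)

lemma geo:
  fixes a ph :: real
  assumes "a \<ge> 0" "ph \<ge> 0" "a * (1 + ph) = ph ^ 2"
  shows "a * (\<Sum>p\<le>n. (1 + ph) ^ (n - p)) \<le> ph * (1 + ph) ^ n"
proof (induction n)
  case 0
  have "a * (1 + ph) \<le> ph * (1 + ph)" using assms by (simp add: power2_eq_square algebra_simps)
  then have "a \<le> ph" using assms mult_le_cancel_right_pos[of "1 + ph" a ph] by simp
  then show ?case by simp
next
  case (Suc n)
  have "(\<Sum>p\<le>Suc n. (1 + ph) ^ (Suc n - p)) = (1 + ph) ^ Suc n + (\<Sum>p\<le>n. (1 + ph) ^ (n - p))"
    by (simp add: sum.atMost_Suc_shift del: sum.atMost_Suc)
  then have "a * (\<Sum>p\<le>Suc n. (1 + ph) ^ (Suc n - p)) = a * (1 + ph) ^ Suc n + a * (\<Sum>p\<le>n. (1 + ph) ^ (n - p))"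
    by (simp add: algebra_simps)
  also have "\<dots> \<le> a * (1 + ph) ^ Suc n + ph * (1 + ph) ^ n" using Suc by simp
  also have "\<dots> = (1 + ph) ^ n * (a * (1 + ph) + ph)" by (simp add: algebra_simps)
  also have "\<dots> = (1 + ph) ^ n * (ph ^ 2 + ph)" using assms by simp
  also have "\<dots> = ph * (1 + ph) ^ Suc n" by (simp add: algebra_simps power2_eq_square)
  finally show ?case .
qed

lemma key_ineq:
  fixes M a ph :: real
  assumes M: "M > 0" and a: "a \<ge> 0" and ph: "ph \<ge> 0" and eq: "a * (1 + ph) = ph ^ 2"
  shows "(\<Sum>p\<le>n. real (n choose p) * (Dsum M a p * Bnd M (1 + ph) k (n - p)))
           \<le> Bnd M (1 + ph) (Suc k) (Suc n)"
proof (cases "k \<le> n")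
  case False
  then have "\<And>p. \<not> k \<le> n - p" by auto
  then show ?thesis using False by (simp add: Bnd_def Dsum_def)
next
  case True
  let ?al = "1 + ph"
  let ?C = "fact n / fact k * M ^ (n - k)"
  have C0: "?C \<ge> 0" using M by simp
  have split: "(\<Sum>p\<le>n. real (n choose p) * (Dsum M a p * Bnd M ?al k (n - p)))
     = Bnd M ?al k n + a * (\<Sum>p\<le>n. real (n choose p) * M ^ p * fact p * Bnd M ?al k (n - p))"
  proof -
    have "\<And>p. real (n choose p) * (Dsum M a p * Bnd M ?al k (n - p)) = (if p = 0 then Bnd M ?al k n else 0)
        + a * (real (n choose p) * M ^ p * fact p * Bnd M ?al k (n - p))"
      by (simp add: Dsum_def algebra_simps)
    then show ?thesis by (simp add: sum.distrib sum_distrib_left)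
  qed
  have trm: "real (n choose p) * M ^ p * fact p * Bnd M ?al k (n - p) \<le> ?C * ?al ^ (n - p)"
    if "p \<le> n" for p
  proof (cases "k \<le> n - p")
    case True
    have f: "real (n choose p) * fact p * fact (n - p) = fact n"
      by (simp add: binomial_fact[OF \<open>p \<le> n\<close>] field_simps)
    have m: "M ^ p * M ^ (n - p - k) = M ^ (n - k)"
      using True that by (simp add: power_add[symmetric])
    have "real (n choose p) * M ^ p * fact p * Bnd M ?al k (n - p)
        = (real (n choose p) * fact p * fact (n - p)) / fact k * (M ^ p * M ^ (n - p - k)) * ?al ^ (n - p)"
      using True by (simp add: Bnd_def)
    also have "\<dots> = ?C * ?al ^ (n - p)" by (simp only: f m)
    finally show ?thesis by simp
  next
    case False
    then show ?thesis using M ph by (simp add: Bnd_def)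
  qed
  let ?X = "(\<Sum>p\<le>n. real (n choose p) * M ^ p * fact p * Bnd M ?al k (n - p))"
  let ?S = "(\<Sum>p\<le>n. ?al ^ (n - p))"
  have "?X \<le> (\<Sum>p\<le>n. ?C * ?al ^ (n - p))"
    by (rule sum_mono) (use trm in auto)
  also have "\<dots> = ?C * ?S" by (simp add: sum_distrib_left)
  finally have x1: "?X \<le> ?C * ?S" .
  have "a * ?X \<le> a * (?C * ?S)" by (rule mult_left_mono[OF x1 a])
  also have "\<dots> = ?C * (a * ?S)" by (simp only: mult.left_commute)
  also have "\<dots> \<le> ?C * (ph * ?al ^ n)"
    by (rule mult_left_mono[OF geo[OF a ph eq] C0])
  finally have s1: "a * ?X \<le> ?C * (ph * ?al ^ n)" .
  have bk: "Bnd M ?al k n = ?C * ?al ^ n" using True by (simp add: Bnd_def)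
  have s2: "(\<Sum>p\<le>n. real (n choose p) * (Dsum M a p * Bnd M ?al k (n - p)))
      \<le> ?C * ?al ^ n + ?C * (ph * ?al ^ n)"
    unfolding split bk using s1 by linarith
  note s2
  also have "\<dots> = ?C * ?al ^ Suc n" by (simp add: algebra_simps)
  also have "\<dots> \<le> fact (Suc n) / fact (Suc k) * M ^ (n - k) * ?al ^ Suc n"
  proof -
    have "fact n / fact k \<le> (fact (Suc n) / fact (Suc k) :: real)"
    proof -
      have "fact (Suc n) / fact (Suc k) = (fact n / fact k) * ((Suc n) / (Suc k) :: real)"
        by (simp add: field_simps)
      moreover have "(1::real) \<le> (Suc n) / (Suc k)" using True by simp
      moreover have "(0::real) \<le> fact n / fact k" by simp
      ultimately show ?thesis using mult_left_mono[of 1 "real (Suc n) / real (Suc k)" "fact n / fact k"] by simp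
    qed
    moreover have "0 \<le> M ^ (n - k)" using M by simp
    moreover have "0 \<le> ?al ^ Suc n" using ph by simp
    ultimately show ?thesis by (metis mult_right_mono)
  qed
  also have "\<dots> = Bnd M ?al (Suc k) (Suc n)" using True by (simp add: Bnd_def)
  finally show ?thesis .
qed

lemma norm_sum_list_le:
  fixes f :: "'a \<Rightarrow> 'b::real_normed_vector"
  shows "norm (sum_list (map f xs)) \<le> sum_list (map (\<lambda>x. norm (f x)) xs)"
  by (induction xs) (auto intro: order_trans[OF norm_triangle_ineq])

lemma sum_sum_list:
  fixes f :: "'i \<Rightarrow> 'a \<Rightarrow> real"
  shows "(\<Sum>i\<in>I. sum_list (map (f i) xs)) = sum_list (map (\<lambda>x. \<Sum>i\<in>I. f i x) xs)"
  by (induction xs) (auto simp: sum.distrib)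

definition Lw :: "nat \<Rightarrow> nat \<Rightarrow> nat list set" where
  "Lw m k = {\<eta>. \<eta> \<in> words m \<and> length \<eta> = k}"

lemma Lw_finite: "finite (Lw m k)"
proof -
  have "Lw m k = {xs. set xs \<subseteq> {0..m} \<and> length xs = k}" by (auto simp: Lw_def words_def)
  then show ?thesis using finite_lists_length_eq[of "{0..m}" k] by simp
qed

lemma Lw_Suc: "Lw m (Suc k) = (\<lambda>(i, \<eta>). i # \<eta>) ` ({0..m} \<times> Lw m k)"
proof
  show "Lw m (Suc k) \<subseteq> (\<lambda>(i, \<eta>). i # \<eta>) ` ({0..m} \<times> Lw m k)"
  proof
    fix x assume "x \<in> Lw m (Suc k)"
    then obtain i \<eta> where "x = i # \<eta>" "i \<in> {0..m}" "\<eta> \<in> Lw m k"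
      by (cases x) (auto simp: Lw_def words_def)
    then show "x \<in> (\<lambda>(i, \<eta>). i # \<eta>) ` ({0..m} \<times> Lw m k)" by force
  qed
qed (auto simp: Lw_def words_def)

lemma sum_Lw_Suc:
  "(\<Sum>\<eta>\<in>Lw m (Suc k). g \<eta>) = (\<Sum>i\<in>{0..m}. \<Sum>\<eta>\<in>Lw m k. (g (i # \<eta>) :: real))"
proof -
  have "inj_on (\<lambda>(i, \<eta>). i # \<eta>) ({0..m} \<times> Lw m k)" by (auto simp: inj_on_def)
  then show ?thesis by (simp add: Lw_Suc sum.reindex sum.cartesian_product split_def)
qed

lemma dsum_bound:
  fixes d :: "nat list \<Rightarrow> nat \<Rightarrow> 'k::real_normed_field"
  assumes hd: "\<And>u i. set u \<subseteq> {0..m} \<Longrightarrow> i < m \<Longrightarrow> norm (d u i) \<le> K * M ^ length u * fact (length u)"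
    and u: "set u \<subseteq> {0..m}"
  shows "(\<Sum>i\<in>{0..m}. norm (dcomp d i u)) \<le> Dsum M (real m * K) (length u)"
proof -
  have "(\<Sum>i\<in>{0..m}. norm (dcomp d i u)) = norm (dcomp d 0 u) + (\<Sum>i\<in>{Suc 0..m}. norm (dcomp d i u))"
    by (simp add: sum.atLeast_Suc_atMost)
  also have "\<dots> \<le> (if length u = 0 then 1 else 0) + (\<Sum>i\<in>{Suc 0..m}. K * M ^ length u * fact (length u))"
  proof (rule add_mono)
    show "norm (dcomp d 0 u) \<le> (if length u = 0 then 1 else 0)"
      by (simp add: dcomp_def one_s_def)
    show "(\<Sum>i\<in>{Suc 0..m}. norm (dcomp d i u)) \<le> (\<Sum>i\<in>{Suc 0..m}. K * M ^ length u * fact (length u))"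
      by (rule sum_mono) (auto simp: dcomp_def intro!: hd u)
  qed
  also have "\<dots> = Dsum M (real m * K) (length u)" by (simp add: Dsum_def)
  finally show ?thesis .
qed

lemma psi_bound:
  fixes d :: "nat list \<Rightarrow> nat \<Rightarrow> 'k::real_normed_field"
  assumes hd: "\<And>u i. set u \<subseteq> {0..m} \<Longrightarrow> i < m \<Longrightarrow> norm (d u i) \<le> K * M ^ length u * fact (length u)"
    and M: "M > 0" and a: "real m * K \<ge> 0" and ph: "ph \<ge> 0" and eq: "real m * K * (1 + ph) = ph ^ 2"
  shows "\<forall>w. set w \<subseteq> {0..m} \<longrightarrow> (\<Sum>\<eta>\<in>Lw m k. norm (psi_one d \<eta> w)) \<le> Bnd M (1 + ph) k (length w)"
proof (induction k)
  case 0
  have "Lw m 0 = {[]}" by (auto simp: Lw_def words_def)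
  then show ?case using M ph by (auto simp: one_s_def Bnd_def)
next
  case (Suc k)
  let ?al = "1 + ph"
  let ?a = "real m * K"
  show ?case
  proof (intro allI impI)
    fix w :: "nat list" assume w: "set w \<subseteq> {0..m}"
    have B0: "Bnd M ?al (Suc k) (length w) \<ge> 0" using M ph by (intro Bnd_nonneg) auto
    show "(\<Sum>\<eta>\<in>Lw m (Suc k). norm (psi_one d \<eta> w)) \<le> Bnd M ?al (Suc k) (length w)"
    proof (cases w)
      case Nil
      then show ?thesis using B0 by (simp add: sum_Lw_Suc pre0_def)
    next
      case (Cons b w')
      show ?thesis
      proof (cases "b = 0")
        case False
        then show ?thesis using B0 Cons by (simp add: sum_Lw_Suc pre0_def)
      next
        case True
        have w': "set w' \<subseteq> {0..m}" using w Cons by auto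
        let ?n = "length w'"
        have "(\<Sum>\<eta>\<in>Lw m (Suc k). norm (psi_one d \<eta> w))
            = (\<Sum>i\<in>{0..m}. \<Sum>\<eta>\<in>Lw m k. norm (sum_list (map (\<lambda>(u, v). dcomp d i u * psi_one d \<eta> v) (splits w'))))"
          using Cons True by (simp add: sum_Lw_Suc pre0_def shuffle_splits)
        also have "\<dots> \<le> (\<Sum>i\<in>{0..m}. \<Sum>\<eta>\<in>Lw m k. sum_list (map (\<lambda>(u, v). norm (dcomp d i u) * norm (psi_one d \<eta> v)) (splits w')))"
          by (intro sum_mono order_trans[OF norm_sum_list_le]) (simp add: split_def norm_mult)
        also have "\<dots> = sum_list (map (\<lambda>(u, v). (\<Sum>i\<in>{0..m}. norm (dcomp d i u)) * (\<Sum>\<eta>\<in>Lw m k. norm (psi_one d \<eta> v))) (splits w'))"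
          by (simp add: sum_sum_list sum_product split_def)
        also have "\<dots> \<le> sum_list (map (\<lambda>(u, v). Dsum M ?a (length u) * Bnd M ?al k (length v)) (splits w'))"
        proof (rule sum_list_mono)
          fix x assume x: "x \<in> set (splits w')"
          obtain u v where uv: "x = (u, v)" by fastforce
          have su: "set u \<subseteq> {0..m}" and sv: "set v \<subseteq> {0..m}" using splits_set[of u v w'] x uv w' by auto
          have "(\<Sum>i\<in>{0..m}. norm (dcomp d i u)) * (\<Sum>\<eta>\<in>Lw m k. norm (psi_one d \<eta> v))
              \<le> Dsum M ?a (length u) * Bnd M ?al k (length v)"
            by (rule mult_mono[OF dsum_bound[OF hd su] Suc.IH[rule_format, OF sv]])
               (use M a in \<open>auto intro: Dsum_nonneg sum_nonneg\<close>)
          then show "(case x of (u, v) \<Rightarrow> (\<Sum>i\<in>{0..m}. norm (dcomp d i u)) * (\<Sum>\<eta>\<in>Lw m k. norm (psi_one d \<eta> v)))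
              \<le> (case x of (u, v) \<Rightarrow> Dsum M ?a (length u) * Bnd M ?al k (length v))" using uv by simp
        qed
        also have "\<dots> = (\<Sum>p\<le>?n. real (?n choose p) * (Dsum M ?a p * Bnd M ?al k (?n - p)))"
          by (rule splits_binom)
        also have "\<dots> \<le> Bnd M ?al (Suc k) (Suc ?n)"
          by (rule key_ineq[OF M a ph eq])
        finally show ?thesis using Cons by simp
      qed
    qed
  qed
qed

lemma vnorm_nonneg: "vnorm n z \<ge> 0"
  by (simp add: vnorm_def)

lemma vnorm_ge: "i < n \<Longrightarrow> norm (z i) \<le> vnorm n z"
  unfolding vnorm_def by (rule Max_ge) auto

lemma vnorm_le: "B \<ge> 0 \<Longrightarrow> (\<And>i. i < n \<Longrightarrow> norm (z i) \<le> B) \<Longrightarrow> vnorm n z \<le> B"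
  unfolding vnorm_def by (subst Max_le_iff) auto

lemma normset_ne: "normset m M n c \<noteq> {}"
  unfolding normset_def words_def by (auto intro!: exI[of _ "[]"])

lemma linf_norm_nonneg:
  assumes "in_linf m M n c"
  shows "linf_norm m M n c \<ge> 0"
proof -
  have "vnorm n (c []) / (M ^ length ([]::nat list) * fact (length ([]::nat list))) \<in> normset m M n c"
    unfolding normset_def words_def by (auto intro!: exI[of _ "[]"])
  then have "vnorm n (c []) \<le> linf_norm m M n c"
    using assms unfolding in_linf_def linf_norm_def by (auto dest: cSup_upper)
  then show ?thesis using vnorm_nonneg[of n "c []"] by linarith
qed

lemma linf_bound:
  assumes "in_linf m M n c" "M > 0" "\<eta> \<in> words m"
  shows "vnorm n (c \<eta>) \<le> linf_norm m M n c * M ^ length \<eta> * fact (length \<eta>)"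
proof -
  have "vnorm n (c \<eta>) / (M ^ length \<eta> * fact (length \<eta>)) \<in> normset m M n c"
    unfolding normset_def using assms(3) by auto
  then have "vnorm n (c \<eta>) / (M ^ length \<eta> * fact (length \<eta>)) \<le> linf_norm m M n c"
    using assms unfolding in_linf_def linf_norm_def by (auto dest: cSup_upper)
  moreover have "M ^ length \<eta> * fact (length \<eta>) > 0" using assms(2) by simp
  ultimately show ?thesis by (simp add: divide_le_eq mult.assoc)
qed

lemma phi_aux:
  fixes a s :: real
  assumes "s ^ 2 = a ^ 2 / 4 + a"
  shows "a * (1 + (a / 2 + s)) = (a / 2 + s) ^ 2"
proof -
  have "(a / 2 + s) ^ 2 = a ^ 2 / 4 + a * s + s ^ 2" by (simp add: power2_eq_square algebra_simps)
  moreover have "a * (1 + (a / 2 + s)) = a + a ^ 2 / 2 + a * s" by (simp add: power2_eq_square algebra_simps)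
  ultimately show ?thesis using assms by simp
qed

lemma phi_props:
  assumes "a \<ge> 0"
  shows "phi a \<ge> 0" "a * (1 + phi a) = (phi a) ^ 2"
proof -
  let ?s = "sqrt (a ^ 2 / 4 + a)"
  have s0: "?s \<ge> 0" using assms by simp
  have s2: "?s ^ 2 = a ^ 2 / 4 + a" using assms by (intro real_sqrt_pow2) simp
  show "phi a \<ge> 0" using assms s0 by (simp add: phi_def)
  show "a * (1 + phi a) = (phi a) ^ 2"
    unfolding phi_def by (rule phi_aux[OF s2])
qed

lemma geom_bdd:
  fixes r :: real
  assumes "0 \<le> r" "r < 1"
  shows "\<exists>B. \<forall>n. (real n + 1) * r ^ n \<le> B"
proof -
  have "(\<lambda>n. of_nat n * r ^ n + r ^ n) \<longlonglongrightarrow> 0 + 0"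
    by (intro tendsto_add powser_times_n_limit_0 LIMSEQ_power_zero) (use assms in auto)
  then have "Bseq (\<lambda>n. of_nat n * r ^ n + r ^ n)"
    by (intro convergent_imp_Bseq) (auto simp: convergent_def)
  then obtain B where "\<forall>n. norm (of_nat n * r ^ n + r ^ n) \<le> B" unfolding Bseq_def by blast
  then have "\<forall>n. (real n + 1) * r ^ n \<le> B"
  proof (intro allI)
    fix n assume h: "\<forall>n. norm (real n * r ^ n + r ^ n) \<le> B"
    have "(real n + 1) * r ^ n = real n * r ^ n + r ^ n" by (simp add: algebra_simps)
    also have "\<dots> \<le> norm (real n * r ^ n + r ^ n)" by simp
    also have "\<dots> \<le> B" using h by blast
    finally show "(real n + 1) * r ^ n \<le> B" .
  qed
  then show ?thesis by blast
qed

theorem lemma3p7: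
  fixes M eps :: real and l m :: nat
    and c d :: "nat list \<Rightarrow> nat \<Rightarrow> 'k::real_normed_field"
  assumes "M > 0"
    and "in_linf m M l c"
    and "in_linf m M m d"
    and "eps > phi (real m * linf_norm m M m d)"
  shows "in_linf m (M * (1 + eps)) l (comp m c d) \<and>
         linf_norm m (M * (1 + eps)) l (comp m c d)
           \<le> linf_norm m M l c * Keps m eps (phi (real m * linf_norm m M m d))"
proof -
  note M = assms(1)
  define C where "C = linf_norm m M l c"
  define K where "K = linf_norm m M m d"
  define ph where "ph = phi (real m * K)"
  let ?al = "1 + ph"
  have C0: "C \<ge> 0" unfolding C_def by (rule linf_norm_nonneg[OF assms(2)])
  have K0: "K \<ge> 0" unfolding K_def by (rule linf_norm_nonneg[OF assms(3)])
  have a0: "real m * K \<ge> 0" using K0 by simp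
  have ph0: "ph \<ge> 0" and eq: "real m * K * (1 + ph) = ph ^ 2"
    unfolding ph_def using phi_props[OF a0] by auto
  have eps: "eps > ph" using assms(4) unfolding ph_def K_def by simp
  have hd: "norm (d u i) \<le> K * M ^ length u * fact (length u)" if "set u \<subseteq> {0..m}" "i < m" for u i
  proof -
    have "norm (d u i) \<le> vnorm m (d u)" by (rule vnorm_ge[OF that(2)])
    also have "\<dots> \<le> K * M ^ length u * fact (length u)"
      unfolding K_def by (rule linf_bound[OF assms(3) M]) (use that in \<open>simp add: words_def\<close>)
    finally show ?thesis .
  qed
  have PB: "\<And>k w. set w \<subseteq> {0..m} \<Longrightarrow> (\<Sum>\<eta>\<in>Lw m k. norm (psi_one d \<eta> w)) \<le> Bnd M ?al k (length w)"
    using psi_bound[of m d K M ph, OF hd M a0 ph0 eq] by blast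
  have coef: "vnorm l (comp m c d w) \<le> (real (length w) + 1) * C * fact (length w) * M ^ length w * ?al ^ length w"
    if w: "w \<in> words m" for w
  proof -
    let ?n = "length w"
    let ?E = "{\<eta>. \<eta> \<in> words m \<and> length \<eta> \<le> ?n}"
    have sw: "set w \<subseteq> {0..m}" using w by (simp add: words_def)
    have finE: "finite ?E"
    proof -
      have "?E = {xs. set xs \<subseteq> {0..m} \<and> length xs \<le> ?n}" by (auto simp: words_def)
      then show ?thesis using finite_lists_length_le[of "{0..m}" ?n] by simp
    qed
    have bnd0: "0 \<le> (real ?n + 1) * C * fact ?n * M ^ ?n * ?al ^ ?n" using C0 M ph0 by simp
    show ?thesis
    proof (rule vnorm_le[OF bnd0])
      fix j assume "j < l"
      have "norm (comp m c d w j) \<le> (\<Sum>\<eta>\<in>?E. norm (c \<eta> j) * norm (psi_one d \<eta> w))"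
        unfolding comp_def by (rule order_trans[OF norm_sum]) (simp add: norm_mult)
      also have "\<dots> \<le> (\<Sum>\<eta>\<in>?E. C * M ^ length \<eta> * fact (length \<eta>) * norm (psi_one d \<eta> w))"
      proof (rule sum_mono)
        fix \<eta> assume "\<eta> \<in> ?E"
        then have "norm (c \<eta> j) \<le> C * M ^ length \<eta> * fact (length \<eta>)"
          using vnorm_ge[OF \<open>j < l\<close>, of "c \<eta>"] linf_bound[OF assms(2) M, of \<eta>] unfolding C_def by auto
        then show "norm (c \<eta> j) * norm (psi_one d \<eta> w) \<le> C * M ^ length \<eta> * fact (length \<eta>) * norm (psi_one d \<eta> w)"
          by (rule mult_right_mono) simp
      qed
      also have "\<dots> = (\<Sum>k\<in>{..?n}. \<Sum>\<eta>\<in>{x. x \<in> ?E \<and> length x = k}. C * M ^ length \<eta> * fact (length \<eta>) * norm (psi_one d \<eta> w))"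
        by (rule sum.group[symmetric]) (use finE in auto)
      also have "\<dots> = (\<Sum>k\<in>{..?n}. C * M ^ k * fact k * (\<Sum>\<eta>\<in>Lw m k. norm (psi_one d \<eta> w)))"
      proof (rule sum.cong[OF refl])
        fix k assume "k \<in> {..?n}"
        then have "{x. x \<in> ?E \<and> length x = k} = Lw m k" by (auto simp: Lw_def)
        then show "(\<Sum>\<eta>\<in>{x. x \<in> ?E \<and> length x = k}. C * M ^ length \<eta> * fact (length \<eta>) * norm (psi_one d \<eta> w))
            = C * M ^ k * fact k * (\<Sum>\<eta>\<in>Lw m k. norm (psi_one d \<eta> w))"
          by (simp add: sum_distrib_left Lw_def)
      qed
      also have "\<dots> \<le> (\<Sum>k\<in>{..?n}. C * M ^ k * fact k * Bnd M ?al k ?n)"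
        by (rule sum_mono, rule mult_left_mono[OF PB[OF sw]]) (use C0 M in auto)
      also have "\<dots> = (\<Sum>k\<in>{..?n}. C * fact ?n * M ^ ?n * ?al ^ ?n)"
      proof (rule sum.cong[OF refl])
        fix k assume "k \<in> {..?n}"
        then have k: "k \<le> ?n" by simp
        have hM: "M ^ k * M ^ (?n - k) = M ^ ?n" using k by (simp add: power_add[symmetric])
        have "C * M ^ k * fact k * Bnd M ?al k ?n = C * (fact k * (fact ?n / fact k)) * (M ^ k * M ^ (?n - k)) * ?al ^ ?n"
          using k by (simp add: Bnd_def ac_simps)
        also have "\<dots> = C * fact ?n * M ^ ?n * ?al ^ ?n" using hM by simp
        finally show "C * M ^ k * fact k * Bnd M ?al k ?n = C * fact ?n * M ^ ?n * ?al ^ ?n" .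
      qed
      also have "\<dots> = (real ?n + 1) * C * fact ?n * M ^ ?n * ?al ^ ?n" by simp
      finally show "norm (comp m c d w j) \<le> (real ?n + 1) * C * fact ?n * M ^ ?n * ?al ^ ?n" .
    qed
  qed
  define g where "g = (\<lambda>\<eta>::nat list. (real (length \<eta>) + 1) * (1 + ph) ^ length \<eta> / (1 + eps) ^ length \<eta>)"
  have Keq: "Keps m eps ph = (SUP \<eta>\<in>words m. g \<eta>)" unfolding Keps_def g_def by simp
  have e1: "1 + eps > 0" using eps ph0 by simp
  define r where "r = ?al / (1 + eps)"
  have r0: "0 \<le> r" "r < 1" unfolding r_def using e1 eps ph0 by (auto simp: divide_less_eq)
  obtain B where B: "\<And>n. (real n + 1) * r ^ n \<le> B" using geom_bdd[OF r0] by blast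
  have gr: "g \<eta> = (real (length \<eta>) + 1) * r ^ length \<eta>" for \<eta>
    unfolding g_def r_def by (simp add: power_divide)
  have bddg: "bdd_above (g ` words m)"
    by (rule bdd_aboveI2[where M = B]) (simp add: gr B)
  have gle: "g \<eta> \<le> Keps m eps ph" if "\<eta> \<in> words m" for \<eta>
    unfolding Keq by (rule cSUP_upper[OF that bddg])
  let ?M' = "M * (1 + eps)"
  have elem: "x \<le> C * Keps m eps ph" if xin: "x \<in> normset m ?M' l (comp m c d)" for x
  proof -
    obtain w where w: "w \<in> words m" and x: "x = vnorm l (comp m c d w) / (?M' ^ length w * fact (length w))"
      using xin unfolding normset_def by blast
    let ?n = "length w"
    have pos: "?M' ^ ?n * fact ?n > 0" using M e1 by simp
    have "x \<le> (real ?n + 1) * C * fact ?n * M ^ ?n * ?al ^ ?n / (?M' ^ ?n * fact ?n)"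
      unfolding x by (rule divide_right_mono[OF coef[OF w]]) (use pos in simp)
    also have "\<dots> = C * g w"
    proof -
      have nz: "fact ?n * M ^ ?n \<noteq> (0::real)" "(1 + eps) ^ ?n \<noteq> 0" using M e1 by auto
      have "(real ?n + 1) * C * fact ?n * M ^ ?n * ?al ^ ?n / (?M' ^ ?n * fact ?n)
          = ((real ?n + 1) * C * ?al ^ ?n) * (fact ?n * M ^ ?n) / ((1 + eps) ^ ?n * (fact ?n * M ^ ?n))"
        by (simp add: power_mult_distrib ac_simps)
      also have "\<dots> = ((real ?n + 1) * C * ?al ^ ?n) / (1 + eps) ^ ?n"
        by (rule mult_divide_mult_cancel_right[OF nz(1)])
      also have "\<dots> = C * g w" by (simp add: g_def ac_simps)
      finally show ?thesis .
    qed
    also have "\<dots> \<le> C * Keps m eps ph" by (rule mult_left_mono[OF gle[OF w] C0])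
    finally show ?thesis .
  qed
  have inl: "in_linf m ?M' l (comp m c d)"
    unfolding in_linf_def by (rule bdd_aboveI[where M = "C * Keps m eps ph"]) (rule elem)
  have "linf_norm m ?M' l (comp m c d) \<le> C * Keps m eps ph"
    unfolding linf_norm_def by (rule cSup_least[OF normset_ne elem])
  then show ?thesis using inl unfolding C_def K_def ph_def by simp
qed

end
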